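(* Let $m\ge2$, $1\le p<\infty$ and $1\le j\le m$. Then for all $s\in\mathbb R$, $$\sum_{n\in\mathbb N^m,\ |n|=k}|sn_j-1|^p\approx k^{p+m-1}|s|^p+k^{m-1},$$ where the constants in $\approx$ may depend on $p$ and $m$ but not on $k$ or $s$.
   Context: For quantities $F_k,G_k$ depending on $k\in\mathbb N$, $F_k\approx G_k$ means there are positive constants $A,B,k_0$ with $AG_k\le F_k\le BG_k$ for all $k\ge k_0$. $|n|=n_1+\dots+n_m$. *)

theory Defs
  imports Complex_Main
begin

text \<open>Multi-indices n in N^m (N including 0), represented as functions
  nat => nat supported on {1..m}, with |n| = n_1 + ... + n_m = k.\<close>
definition multi_indices :: "nat \<Rightarrow> nat \<Rightarrow> (nat \<Rightarrow> nat) set" where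
  "multi_indices m k = {n. (\<forall>i. i \<notin> {1..m} \<longrightarrow> n i = 0) \<and> (\<Sum>i=1..m. n i) = k}"

end

theory Submission imports Defs "HOL-Library.FuncSet" begin

lemma oneD:
  fixes p s :: real and h :: nat
  assumes p: "1 \<le> p" and h: "1 \<le> h"
  shows "(1/(8 * 8 powr p)) * (real h + 1) * (1 + (\<bar>s\<bar> * real h) powr p)
          \<le> (\<Sum>t=0..h. \<bar>s * real t - 1\<bar> powr p)"
proof -
  define X where "X = (\<bar>s\<bar> * real h) powr p"
  define S where "S = (\<Sum>t=0..h. \<bar>s * real t - 1\<bar> powr p)"
  have X0: "X \<ge> 0" unfolding X_def by simp
  have p8: "8 powr p \<ge> 1" using p by (simp add: ge_one_powr_ge_zero)
  have p2: "2 powr p \<le> 8 powr p" using p by (intro powr_mono2) auto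
  have mul: "2 powr p * 4 powr p = 8 powr p" by (simp flip: powr_mult)
  show ?thesis
  proof (cases "\<bar>s\<bar> * real h \<le> 1/2")
    case True
    have trm: "(1/2) powr p \<le> \<bar>s * real t - 1\<bar> powr p" if "t \<in> {0..h}" for t
    proof -
      have "\<bar>s * real t\<bar> \<le> \<bar>s\<bar> * real h" using that
        by (simp add: abs_mult mult_left_mono)
      hence "1/2 \<le> \<bar>s * real t - 1\<bar>" using True by linarith
      thus ?thesis using p by (intro powr_mono2) auto
    qed
    have "(\<Sum>t=0..h. (1/2::real) powr p) \<le> S" unfolding S_def by (rule sum_mono) (rule trm)
    hence S1: "(real h + 1) * (1/2) powr p \<le> S" by (simp add: add.commute)
    have X1: "X \<le> 1" unfolding X_def using True p by (intro powr_le1) auto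
    have h1: "(1/2::real) powr p = 1 / 2 powr p" by (simp add: powr_divide)
    have "(1/(8 * 8 powr p)) * (real h + 1) * (1 + X) \<le> (1/(8 * 8 powr p)) * (real h + 1) * 2"
      using X1 by (intro mult_left_mono) auto
    also have "\<dots> \<le> (real h + 1) * (1/2) powr p"
    proof -
      have "2 / (8 * 8 powr p) \<le> 1 / 2 powr p"
        using p2 p8 by (simp add: divide_simps) 
      hence "(real h + 1) * (2 / (8 * 8 powr p)) \<le> (real h + 1) * (1 / 2 powr p)"
        by (intro mult_left_mono) auto
      moreover have "(1/(8 * 8 powr p)) * (real h + 1) * 2 = (real h + 1) * (2 / (8 * 8 powr p))" by (simp add: field_simps)
      ultimately show ?thesis unfolding h1 by linarith
    qed
    finally show ?thesis using S1 unfolding X_def S_def by linarith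
  next
    case False
    define d where "d = h - h div 2"
    define Y where "Y = (\<bar>s\<bar> * real h / 4) powr p"
    define f where "f = (\<lambda>t::nat. \<bar>s * real t - 1\<bar> powr p)"
    have f0: "f t \<ge> 0" for t unfolding f_def by simp
    have pair: "Y \<le> f t + f (t + d)" if "t \<in> {0..h div 2}" for t
    proof -
      have "\<bar>s\<bar> * real d \<le> \<bar>s * real t - 1\<bar> + \<bar>s * real (t + d) - 1\<bar>"
      proof -
        have "\<bar>s\<bar> * real d = \<bar>(s * real (t + d) - 1) - (s * real t - 1)\<bar>"
          by (simp add: algebra_simps abs_mult)
        thus ?thesis by linarith
      qed
      moreover have "real h / 2 \<le> real d" unfolding d_def by linarith
      hence "\<bar>s\<bar> * real h / 2 \<le> \<bar>s\<bar> * real d"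
        by (metis abs_ge_zero mult_left_mono times_divide_eq_right)
      ultimately have "\<bar>s\<bar> * real h / 4 \<le> \<bar>s * real t - 1\<bar> \<or> \<bar>s\<bar> * real h / 4 \<le> \<bar>s * real (t+d) - 1\<bar>"
        by linarith
      moreover have "0 \<le> \<bar>s\<bar> * real h / 4" by simp
      ultimately have "Y \<le> f t \<or> Y \<le> f (t+d)" unfolding Y_def f_def
        using p by (metis powr_mono2 order_trans zero_le_one)
      thus ?thesis using f0[of t] f0[of "t+d"] by linarith
    qed
    have "(\<Sum>t=0..h div 2. Y) \<le> (\<Sum>t=0..h div 2. f t + f (t + d))"
      by (rule sum_mono) (rule pair)
    also have "\<dots> = (\<Sum>t=0..h div 2. f t) + (\<Sum>t=0..h div 2. f (t + d))"
      by (simp add: sum.distrib)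
    also have "(\<Sum>t=0..h div 2. f t) \<le> S"
      unfolding S_def f_def[symmetric] by (rule sum_mono2) (auto simp: f0)
    also have "(\<Sum>t=0..h div 2. f (t + d)) = sum f ((\<lambda>t. t + d) ` {0..h div 2})"
      by (subst sum.reindex) (auto simp: inj_on_def)
    also have "\<dots> \<le> S"
      unfolding S_def f_def[symmetric] by (rule sum_mono2) (auto simp: f0 d_def)
    finally have YS: "(real (h div 2) + 1) * Y \<le> 2 * S" by (simp add: add.commute)
    have Yeq: "Y = X / 4 powr p" unfolding Y_def X_def by (simp add: powr_divide)
    have "h \<le> 2 * (h div 2) + 1" by presburger
    hence "real h \<le> 2 * real (h div 2) + 1" by linarith
    hence hd: "(real h + 1) / 2 \<le> real (h div 2) + 1" by (simp add: field_simps)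
    have SX: "(real h + 1) * X / (4 * 4 powr p) \<le> S"
    proof -
      have "(real h + 1) / 2 * Y \<le> (real (h div 2) + 1) * Y"
        using hd by (intro mult_right_mono) (auto simp: Y_def)
      hence "(real h + 1) * Y \<le> 4 * S" using YS by linarith
      moreover have "(real h + 1) * X / (4 * 4 powr p) = (real h + 1) * Y / 4"
        unfolding Yeq by simp
      ultimately show ?thesis by linarith
    qed
    have Xge: "1 \<le> 2 powr p * X"
    proof -
      have a: "(1/2) powr p \<le> X" unfolding X_def using False p
        by (intro powr_mono2) auto
      have b: "2 powr p * (1/2) powr p = 1" by (simp flip: powr_mult)
      have "2 powr p * (1/2) powr p \<le> 2 powr p * X"
        using a by (intro mult_left_mono) auto
      thus ?thesis using b by linarith
    qed
    have p21: "1 \<le> 2 powr p" using p by (simp add: ge_one_powr_ge_zero)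
    have "1 * X \<le> 2 powr p * X" using p21 X0 by (intro mult_right_mono) auto
    hence "1 + X \<le> 2 * 2 powr p * X" using Xge by linarith
    hence "(1/(8 * 8 powr p)) * (real h + 1) * (1 + X) \<le> (1/(8 * 8 powr p)) * (real h + 1) * (2 * 2 powr p * X)"
      by (intro mult_left_mono) auto
    also have "\<dots> = (real h + 1) * X / (4 * 4 powr p)"
      unfolding mul[symmetric] using p8 by (simp add: field_simps)
    finally show ?thesis using SX unfolding X_def S_def by linarith
  qed
qed



lemma MI_le: "n \<in> multi_indices m k \<Longrightarrow> i \<in> {1..m} \<Longrightarrow> n i \<le> k"
  unfolding multi_indices_def
  by (metis (mono_tags, lifting) finite_atLeastAtMost member_le_sum mem_Collect_eq zero_le)

lemma MI_finite: "finite (multi_indices m k)"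
proof -
  have "multi_indices m k \<subseteq> (\<lambda>g i. if i \<in> {1..m} then g i else 0) ` PiE {1..m} (\<lambda>_. {0..k})"
  proof
    fix n assume n: "n \<in> multi_indices m k"
    have "restrict n {1..m} \<in> PiE {1..m} (\<lambda>_. {0..k})" using MI_le[OF n] by auto
    moreover have "n = (\<lambda>i. if i \<in> {1..m} then restrict n {1..m} i else 0)"
      using n unfolding multi_indices_def by auto
    ultimately show "n \<in> (\<lambda>g i. if i \<in> {1..m} then g i else 0) ` PiE {1..m} (\<lambda>_. {0..k})"
      by blast
  qed
  moreover have "finite (PiE {1..m} (\<lambda>_::nat. {0..k::nat}))" by (rule finite_PiE) auto
  ultimately show ?thesis by (meson finite_imageI finite_subset)
qed

lemma MI_card: assumes "1 \<le> m" shows "card (multi_indices m k) \<le> (k+1)^(m-1)"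
proof -
  define R where "R = {1..m} - {1}"
  have inj: "inj_on (\<lambda>n. restrict n R) (multi_indices m k)"
  proof (rule inj_onI)
    fix n n' assume n: "n \<in> multi_indices m k" and n': "n' \<in> multi_indices m k"
      and eq: "restrict n R = restrict n' R"
    have eqR: "n i = n' i" if "i \<in> R" for i using eq that by (metis restrict_apply')
    have gen: "sum f {1..m} = f 1 + sum f R" for f :: "nat \<Rightarrow> nat"
      unfolding R_def using assms by (intro sum.remove) auto
    have s: "n 1 + sum n R = k" "n' 1 + sum n' R = k"
      using n n' gen[of n] gen[of n'] unfolding multi_indices_def by auto
    have "sum n R = sum n' R" using eqR by (rule sum.cong[OF refl])
    hence "n 1 = n' 1" using s by linarith
    show "n = n'"
    proof
      fix i show "n i = n' i"
      proof (cases "i \<in> R")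
        case True thus ?thesis by (rule eqR)
      next
        case False
        show ?thesis
        proof (cases "i = 1")
          case True thus ?thesis using \<open>n 1 = n' 1\<close> by simp
        next
          case False
          hence "i \<notin> {1..m}" using \<open>i \<notin> R\<close> unfolding R_def by auto
          thus ?thesis using n n' unfolding multi_indices_def by auto
        qed
      qed
    qed
  qed
  have sub: "(\<lambda>n. restrict n R) ` multi_indices m k \<subseteq> PiE R (\<lambda>_. {0..k})"
  proof
    fix x assume "x \<in> (\<lambda>n. restrict n R) ` multi_indices m k"
    then obtain n where n: "n \<in> multi_indices m k" and x: "x = restrict n R" by blast
    have "n i \<in> {0..k}" if "i \<in> R" for i using MI_le[OF n, of i] that unfolding R_def by auto
    thus "x \<in> PiE R (\<lambda>_. {0..k})" unfolding x by auto
  qed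
  have "card (multi_indices m k) \<le> card (PiE R (\<lambda>_. {0..k}))"
    using card_inj_on_le[OF inj sub] by (simp add: R_def finite_PiE)
  also have "\<dots> = (k+1)^(m-1)"
    using assms by (simp add: card_PiE R_def)
  finally show ?thesis .
qed

lemma MI_lower:
  fixes F :: "nat \<Rightarrow> real"
  assumes m: "2 \<le> m" and j: "1 \<le> j" "j \<le> m" and km: "m * h \<le> k"
    and F0: "\<And>t. F t \<ge> 0"
  shows "real ((h+1)^(m-2)) * (\<Sum>t=0..h. F t) \<le> (\<Sum>n\<in>multi_indices m k. F (n j))"
proof -
  define i0 where "i0 = (if j = 1 then 2 else (1::nat))"
  have i0: "i0 \<in> {1..m}" "i0 \<noteq> j" using m j unfolding i0_def by auto
  define R where "R = {1..m} - {j, i0}"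
  have cardR: "card R = m - 2" unfolding R_def using i0 j by (subst card_Diff_subset) auto
  have jR: "j \<notin> R" "i0 \<notin> R" unfolding R_def by auto
  have finR: "finite R" unfolding R_def by auto
  have split: "{1..m} = insert j (insert i0 R)" unfolding R_def using i0 j by auto
  define G where "G = PiE R (\<lambda>_. {0..h})"
  define T where "T = {0..h}"
  define \<phi> where "\<phi> = (\<lambda>(t::nat, g::nat \<Rightarrow> nat). (\<lambda>i. if i = j then t else if i \<in> R then g i
        else if i = i0 then k - t - sum g R else 0))"
  have phij: "\<phi> (t, g) j = t" for t g unfolding \<phi>_def by simp
  have inj: "inj_on \<phi> (T \<times> G)"
  proof (rule inj_onI)
    fix x y assume x: "x \<in> T \<times> G" and y: "y \<in> T \<times> G" and e: "\<phi> x = \<phi> y"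
    obtain t g where xt: "x = (t, g)" by fastforce
    obtain t' g' where yt: "y = (t', g')" by fastforce
    have "t = t'" using e phij unfolding xt yt by metis
    moreover have "g = g'"
    proof (rule PiE_ext)
      show "g \<in> R \<rightarrow>\<^sub>E {0..h}" "g' \<in> R \<rightarrow>\<^sub>E {0..h}" using x y unfolding xt yt G_def by auto
      fix i assume "i \<in> R"
      hence "\<phi> (t,g) i = g i" "\<phi> (t',g') i = g' i" using jR unfolding \<phi>_def by auto
      thus "g i = g' i" using e unfolding xt yt by metis
    qed
    ultimately show "x = y" using xt yt by simp
  qed
  have sub: "\<phi> ` (T \<times> G) \<subseteq> multi_indices m k"
  proof
    fix n assume "n \<in> \<phi> ` (T \<times> G)"
    then obtain t g where tg: "t \<in> T" "g \<in> G" and n: "n = \<phi> (t, g)" by blast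
    have "sum g R \<le> sum (\<lambda>_. h) R"
      using tg(2) unfolding G_def by (intro sum_mono) auto
    hence "sum g R \<le> card R * h" by simp
    also have "\<dots> \<le> (m - 1) * h" using cardR by (intro mult_right_mono) auto
    finally have "t + sum g R \<le> h + (m-1) * h" using tg(1) unfolding T_def by simp
    also have "\<dots> = m * h" using m by (cases m) auto
    finally have tk: "t + sum g R \<le> k" using km by linarith
    have sR: "sum n R = sum g R" unfolding n \<phi>_def using jR by (intro sum.cong) auto
    have "sum n {1..m} = n j + (n i0 + sum n R)"
      unfolding split using jR i0 finR by simp
    also have "\<dots> = t + ((k - t - sum g R) + sum g R)"
      unfolding sR unfolding n \<phi>_def using i0 jR by simp
    also have "\<dots> = k" using tk by simp
    finally have "sum n {1..m} = k" .
    moreover have "n i = 0" if "i \<notin> {1..m}" for i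
      using that j i0 unfolding n \<phi>_def R_def by auto
    ultimately show "n \<in> multi_indices m k" unfolding multi_indices_def by auto
  qed
  have "(\<Sum>n\<in>\<phi> ` (T \<times> G). F (n j)) \<le> (\<Sum>n\<in>multi_indices m k. F (n j))"
    by (rule sum_mono2[OF MI_finite sub]) (simp add: F0)
  moreover have "(\<Sum>n\<in>\<phi> ` (T \<times> G). F (n j)) = (\<Sum>x\<in>T \<times> G. F (\<phi> x j))"
    by (subst sum.reindex[OF inj]) simp
  moreover have "(\<Sum>x\<in>T \<times> G. F (\<phi> x j)) = (\<Sum>t\<in>T. \<Sum>g\<in>G. F t)"
  proof -
    have "(\<Sum>x\<in>T \<times> G. F (\<phi> x j)) = (\<Sum>x\<in>T \<times> G. (\<lambda>t g. F t) (fst x) (snd x))"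
      by (intro sum.cong refl) (metis phij prod.collapse)
    also have "\<dots> = (\<Sum>(t,g)\<in>T \<times> G. F t)" by (simp add: split_def)
    also have "\<dots> = (\<Sum>t\<in>T. \<Sum>g\<in>G. F t)"
      by (rule sum.cartesian_product[symmetric])
    finally show ?thesis .
  qed
  moreover have "(\<Sum>t\<in>T. \<Sum>g\<in>G. F t) = real (card G) * (\<Sum>t\<in>T. F t)"
    by (simp add: sum_distrib_right mult.commute)
  moreover have "card G = (h+1)^(m-2)" unfolding G_def using finR cardR by (simp add: card_PiE)
  ultimately show ?thesis unfolding T_def by simp
qed

lemma powr_sum_le:
  fixes x y p :: real assumes "0 \<le> x" "0 \<le> y" "0 \<le> p"
  shows "(x + y) powr p \<le> 2 powr p * (x powr p + y powr p)"
proof -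
  define M where "M = max x y"
  have "(x + y) powr p \<le> (2 * M) powr p" using assms unfolding M_def by (intro powr_mono2) auto
  also have "\<dots> = 2 powr p * M powr p" using assms unfolding M_def by (simp add: powr_mult)
  also have "M powr p \<le> x powr p + y powr p" unfolding M_def by (cases "x \<le> y") auto
  hence "2 powr p * M powr p \<le> 2 powr p * (x powr p + y powr p)" by (intro mult_left_mono) auto
  finally show ?thesis .
qed

theorem lemma4p4:
  fixes m j :: nat and p :: real
  assumes "m \<ge> 2" and "1 \<le> p" and "1 \<le> j" and "j \<le> m"
  shows "\<exists>A B :: real. \<exists>k0 :: nat. A > 0 \<and> B > 0 \<and> k0 > 0 \<and>
    (\<forall>s :: real. \<forall>k \<ge> k0.
       A * (real k powr (p + real m - 1) * \<bar>s\<bar> powr p + real k ^ (m - 1))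
         \<le> (\<Sum>n\<in>multi_indices m k. \<bar>s * real (n j) - 1\<bar> powr p)
     \<and> (\<Sum>n\<in>multi_indices m k. \<bar>s * real (n j) - 1\<bar> powr p)
         \<le> B * (real k powr (p + real m - 1) * \<bar>s\<bar> powr p + real k ^ (m - 1)))"
proof -
  define c where "c = 1/(8 * 8 powr p)"
  define A where "A = c * (1/real m)^(m-1) * (1/(2*real m)) powr p"
  define B where "B = (2::real)^(m-1) * 2 powr p"
  have m: "2 \<le> m" and p: "1 \<le> p" and j: "1 \<le> j" "j \<le> m" using assms by auto
  have A0: "A > 0" unfolding A_def c_def using m by auto
  have B0: "B > 0" unfolding B_def by auto
  have main: "A * (real k powr (p + real m - 1) * \<bar>s\<bar> powr p + real k ^ (m - 1))
         \<le> (\<Sum>n\<in>multi_indices m k. \<bar>s * real (n j) - 1\<bar> powr p)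
     \<and> (\<Sum>n\<in>multi_indices m k. \<bar>s * real (n j) - 1\<bar> powr p)
         \<le> B * (real k powr (p + real m - 1) * \<bar>s\<bar> powr p + real k ^ (m - 1))"
    if k: "m \<le> k" for s k
  proof -
    define K where "K = real k"
    define a where "a = \<bar>s\<bar>"
    define S where "S = (\<Sum>n\<in>multi_indices m k. \<bar>s * real (n j) - 1\<bar> powr p)"
    have K0: "K > 0" unfolding K_def using k m by auto
    have a0: "a \<ge> 0" unfolding a_def by simp
    have Kpow: "K powr (p + real m - 1) = K powr p * K^(m-1)"
    proof -
      have e: "p + real m - 1 = p + real (m - 1)" using m by auto
      have "K powr (p + real (m - 1)) = K powr p * K powr real (m - 1)" by (rule powr_add)
      also have "K powr real (m - 1) = K ^ (m - 1)" using K0 by (rule powr_realpow)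
      finally show ?thesis unfolding e .
    qed
    define E where "E = K powr p * K^(m-1) * a powr p + K^(m-1)"
    have upper: "S \<le> B * E"
    proof -
      have each: "\<bar>s * real (n j) - 1\<bar> powr p \<le> 2 powr p * ((a * K) powr p + 1)"
        if n: "n \<in> multi_indices m k" for n
      proof -
        have "n j \<le> k" using MI_le[OF n] j by auto
        hence "\<bar>s * real (n j)\<bar> \<le> a * K" unfolding a_def K_def
          by (simp add: abs_mult mult_left_mono)
        hence "\<bar>s * real (n j) - 1\<bar> \<le> a * K + 1" by linarith
        hence "\<bar>s * real (n j) - 1\<bar> powr p \<le> (a * K + 1) powr p" using p by (intro powr_mono2) auto
        also have "\<dots> \<le> 2 powr p * ((a * K) powr p + 1 powr p)"
          using a0 K0 p by (intro powr_sum_le) auto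
        finally show ?thesis by simp
      qed
      have "S \<le> (\<Sum>n\<in>multi_indices m k. 2 powr p * ((a * K) powr p + 1))"
        unfolding S_def by (rule sum_mono) (rule each)
      also have "\<dots> = real (card (multi_indices m k)) * (2 powr p * ((a * K) powr p + 1))" by simp
      also have "\<dots> \<le> real ((k+1)^(m-1)) * (2 powr p * ((a * K) powr p + 1))"
      proof -
        have "card (multi_indices m k) \<le> (k+1)^(m-1)" using MI_card[of m k] m by auto
        hence "real (card (multi_indices m k)) \<le> real ((k+1)^(m-1))" by (simp only: of_nat_le_iff)
        thus ?thesis by (intro mult_right_mono) auto
      qed
      also have "real ((k+1)^(m-1)) \<le> (2 * K)^(m-1)"
      proof -
        have "real (k+1) \<le> 2 * K" unfolding K_def using k m by auto
        hence "real (k+1) ^ (m-1) \<le> (2*K)^(m-1)" by (intro power_mono) auto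
        thus ?thesis by simp
      qed
      hence "real ((k+1)^(m-1)) * (2 powr p * ((a * K) powr p + 1)) \<le> (2 * K)^(m-1) * (2 powr p * ((a * K) powr p + 1))"
        by (intro mult_right_mono) auto
      also have "\<dots> = B * E" unfolding B_def E_def using a0 K0
        by (simp add: powr_mult power_mult_distrib algebra_simps)
      finally show ?thesis .
    qed
    define h where "h = k div m"
    have h1: "1 \<le> h" unfolding h_def using div_le_mono[OF k, of m] m by simp
    have mh: "m * h \<le> k" unfolding h_def by simp
    have kl: "k < m * (h + 1)"
    proof -
      have "k = m * h + k mod m" unfolding h_def by simp
      moreover have "k mod m < m" using m by simp
      ultimately show ?thesis by (simp add: algebra_simps)
    qed
    have hK1: "K / real m \<le> real h + 1"
    proof -
      have "K < real m * (real h + 1)" unfolding K_def using kl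
        by (metis of_nat_1 of_nat_add of_nat_less_iff of_nat_mult)
      thus ?thesis using m by (simp add: divide_simps mult.commute)
    qed
    have hK2: "K / (2 * real m) \<le> real h"
    proof -
      have "real h \<ge> 1" using h1 by simp
      hence "K / real m \<le> 2 * real h" using hK1 by linarith
      moreover have "K / (2 * real m) = (K / real m) / 2" by simp
      ultimately show ?thesis by linarith
    qed
    have L1: "real ((h+1)^(m-2)) * (\<Sum>t=0..h. \<bar>s * real t - 1\<bar> powr p) \<le> S"
      unfolding S_def using MI_lower[OF m j mh, of "\<lambda>t. \<bar>s * real t - 1\<bar> powr p"] by simp
    have L2: "c * (real h + 1) * (1 + (a * real h) powr p) \<le> (\<Sum>t=0..h. \<bar>s * real t - 1\<bar> powr p)"
      unfolding c_def a_def using oneD[OF p h1] by simp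
    have "real ((h+1)^(m-2)) * (c * (real h + 1) * (1 + (a * real h) powr p)) \<le> S"
    proof -
      have "real ((h+1)^(m-2)) * (c * (real h + 1) * (1 + (a * real h) powr p))
          \<le> real ((h+1)^(m-2)) * (\<Sum>t=0..h. \<bar>s * real t - 1\<bar> powr p)"
        using L2 by (intro mult_left_mono) auto
      thus ?thesis using L1 by linarith
    qed
    moreover have "real ((h+1)^(m-2)) * (c * (real h + 1) * (1 + (a * real h) powr p))
        = c * (real h + 1)^(m-1) * (1 + (a * real h) powr p)"
    proof -
      have e: "(real h + 1)^(m-1) = (real h + 1)^(m-2) * (real h + 1)"
        using m by (metis One_nat_def Suc_diff_Suc Suc_le_lessD numeral_2_eq_2 power_Suc2)
      show ?thesis unfolding e by (simp add: mult_ac add.commute)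
    qed
    ultimately have L3: "c * (real h + 1)^(m-1) * (1 + (a * real h) powr p) \<le> S" by linarith
    have P1: "(K / real m)^(m-1) \<le> (real h + 1)^(m-1)"
      using hK1 K0 m by (intro power_mono) auto
    have P2: "(a * (K / (2 * real m))) powr p \<le> (a * real h) powr p"
      using hK2 K0 m a0 p by (intro powr_mono2 mult_left_mono) auto
    have c0: "c > 0" unfolding c_def by simp
    define q where "q = (1/(2*real m)) powr p"
    have q1: "q \<le> 1" unfolding q_def using m p by (intro powr_le1) auto
    have q0: "q \<ge> 0" unfolding q_def by simp
    have "A * E = c * (K / real m)^(m-1) * (q + q * K powr p * a powr p)"
      unfolding A_def E_def q_def using K0 m
      by (simp add: power_divide field_simps)
    also have "\<dots> \<le> c * (K / real m)^(m-1) * (1 + (a * (K / (2 * real m))) powr p)"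
    proof -
      have "(a * (K / (2 * real m))) powr p = q * K powr p * a powr p"
        unfolding q_def using a0 K0 m
        by (simp add: powr_mult powr_divide mult_ac)
      hence "q + q * K powr p * a powr p \<le> 1 + (a * (K / (2 * real m))) powr p" using q1 by simp
      thus ?thesis using c0 K0 m by (intro mult_left_mono) auto
    qed
    also have "\<dots> \<le> c * (real h + 1)^(m-1) * (1 + (a * real h) powr p)"
    proof -
      have "(K / real m)^(m-1) * (1 + (a * (K / (2 * real m))) powr p)
          \<le> (real h + 1)^(m-1) * (1 + (a * real h) powr p)"
        using P1 P2 K0 m by (intro mult_mono) auto
      thus ?thesis using c0 by (simp add: mult.assoc mult_left_mono)
    qed
    finally have lower: "A * E \<le> S" using L3 by linarith
    show ?thesis using upper lower unfolding S_def E_def Kpow[unfolded K_def] K_def a_def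
      by (simp add: mult_ac)
  qed
  show ?thesis
    by (rule exI[of _ A], rule exI[of _ B], rule exI[of _ m]) (use A0 B0 m main in auto)
qed


end
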